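(* Let $n\ge 2$, $a,b,c\in\mathbb{Z}_n$ with $a\neq 0$ and $c$ invertible in $\mathbb{Z}_n$, and $P(x,y)=a+bx+cy$. Then the groupoid $(\mathbb{Z}_n,* )$ with $x*y=P(x,y)$ has the cross inverse property if and only if $bc\equiv 1\pmod n$.
   Context: $\mathbb{Z}_n$ is the ring of integers modulo $n$. Since $c$ is invertible, for each $x$ the map $y\mapsto x*y$ is a bijection, so there is a unique $e_\rho(x)$ with $x*e_\rho(x)=x$ (local right identity) and a unique $x^\rho$ with $x*x^\rho=e_\rho(x)$ (right inverse). The cross inverse property means $(x*y)*x^\rho=y$ for all $x,y\in\mathbb{Z}_n$. *)

theory Defs
  imports "HOL-Number_Theory.Number_Theory"
begin

text \<open>Z_n is modelled by the carrier {0..<n} of integers with arithmetic mod n.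
  The groupoid operation x * y = P(x,y) = a + b x + c y (mod n).\<close>

definition lin_op :: "int \<Rightarrow> int \<Rightarrow> int \<Rightarrow> int \<Rightarrow> int \<Rightarrow> int \<Rightarrow> int" where
  "lin_op n a b c x y = (a + b * x + c * y) mod n"

definition loc_right_id :: "int \<Rightarrow> (int \<Rightarrow> int \<Rightarrow> int) \<Rightarrow> int \<Rightarrow> int" where
  "loc_right_id n op x = (THE e. e \<in> {0..<n} \<and> op x e = x)"

definition right_inv :: "int \<Rightarrow> (int \<Rightarrow> int \<Rightarrow> int) \<Rightarrow> int \<Rightarrow> int" where
  "right_inv n op x = (THE r. r \<in> {0..<n} \<and> op x r = loc_right_id n op x)"

definition cross_inverse_prop :: "int \<Rightarrow> (int \<Rightarrow> int \<Rightarrow> int) \<Rightarrow> bool" where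
  "cross_inverse_prop n op =
     (\<forall>x\<in>{0..<n}. \<forall>y\<in>{0..<n}. op (op x y) (right_inv n op x) = y)"

end

theory Submission
  imports Defs
begin

lemma cmod_cancel:
  fixes n c u k Z :: int
  assumes "c*u = 1 + k*n"
  shows "(W + c*(u*Z)) mod n = (W + Z) mod n"
proof -
  have "W + c*(u*Z) = (W + Z) + (k*Z)*n"
  proof -
    have "c*(u*Z) = (c*u)*Z" by simp
    also have "\<dots> = Z + (k*Z)*n" using assms by (simp add: algebra_simps)
    finally show ?thesis by simp
  qed
  thus ?thesis by (metis mod_mult_self1)
qed

lemma solve_unique:
  fixes n c u k s t :: int
  assumes n: "n > 0" and cu: "c*u = 1 + k*n" and t: "t \<in> {0..<n}"
  shows "(THE e. e \<in> {0..<n} \<and> (s + c*e) mod n = t) = (u*(t - s)) mod n"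
proof (rule the_equality)
  have "(s + c*((u*(t - s)) mod n)) mod n = (s + c*(u*(t-s))) mod n"
    by (metis mod_add_right_eq mod_mult_right_eq)
  also have "\<dots> = (s + (t - s)) mod n" by (rule cmod_cancel[OF cu])
  also have "\<dots> = t" using t by simp
  finally show "(u*(t - s)) mod n \<in> {0..<n} \<and> (s + c*((u*(t - s)) mod n)) mod n = t"
    using n by simp
next
  fix e assume e: "e \<in> {0..<n} \<and> (s + c*e) mod n = t"
  have "(u*(t - s)) mod n = (u*((s + c*e) mod n - s)) mod n" using e by simp
  also have "\<dots> = (u*((s + c*e) - s)) mod n"
    by (metis mod_diff_left_eq mod_mult_right_eq)
  also have "\<dots> = (0 + c*(u*e)) mod n" by (simp add: algebra_simps)
  also have "\<dots> = (0 + e) mod n" by (rule cmod_cancel[OF cu])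
  also have "\<dots> = e" using e by simp
  finally show "e = (u*(t - s)) mod n" by simp
qed

lemma mm:
  fixes a b c T Q n :: int
  shows "(a + b*(T mod n) + c*(Q mod n)) mod n = (a + b*T + c*Q) mod n"
proof -
  have "(a + b*(T mod n) + c*(Q mod n)) mod n = ((a + b*(T mod n)) mod n + (c*(Q mod n)) mod n) mod n"
    by (rule mod_add_eq[symmetric])
  also have "(a + b*(T mod n)) mod n = (a + b*T) mod n"
    by (metis mod_add_right_eq mod_mult_right_eq)
  also have "(c*(Q mod n)) mod n = (c*Q) mod n" by (rule mod_mult_right_eq)
  also have "((a + b*T) mod n + (c*Q) mod n) mod n = (a + b*T + c*Q) mod n"
    by (rule mod_add_eq)
  finally show ?thesis .
qed

lemma core:
  fixes n a b c u k x y :: int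
  assumes n: "n > 0" and cu: "c*u = 1 + k*n" and x: "x \<in> {0..<n}"
  shows "lin_op n a b c (lin_op n a b c x y) (right_inv n (lin_op n a b c) x)
     = (a*b + b*b*x + b*c*y - b*x + u*(x-a-b*x)) mod n"
proof -
  define e where "e = (u*(x - (a + b*x))) mod n"
  have le: "loc_right_id n (lin_op n a b c) x = e"
    unfolding loc_right_id_def lin_op_def e_def
    using solve_unique[OF n cu x, of "a + b*x"] by (simp add: add.assoc)
  have e: "e \<in> {0..<n}" using n by (simp add: e_def)
  define r where "r = (u*(e - (a + b*x))) mod n"
  have ri: "right_inv n (lin_op n a b c) x = r"
    unfolding right_inv_def le unfolding lin_op_def r_def
    using solve_unique[OF n cu e, of "a + b*x"] by (simp add: add.assoc)
  have "lin_op n a b c (lin_op n a b c x y) r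
      = (a + b*((a + b*x + c*y) mod n) + c*r) mod n" by (simp add: lin_op_def)
  also have "\<dots> = ((a + b*(a + b*x + c*y)) + c*(u*(e - (a + b*x)))) mod n"
    unfolding r_def by (rule mm)
  also have "\<dots> = ((a + b*(a + b*x + c*y)) + (e - (a + b*x))) mod n"
    by (rule cmod_cancel[OF cu])
  also have "\<dots> = ((a*b + b*b*x + b*c*y - b*x) + e) mod n"
    by (simp add: algebra_simps)
  also have "\<dots> = (a*b + b*b*x + b*c*y - b*x + u*(x-a-b*x)) mod n"
  proof -
    have "((a*b + b*b*x + b*c*y - b*x) + e) mod n = ((a*b + b*b*x + b*c*y - b*x) + u*(x - (a + b*x))) mod n"
      unfolding e_def by (rule mod_add_right_eq)
    also have "x - (a + b*x) = x-a-b*x" by simp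
    finally show ?thesis by simp
  qed
  finally show ?thesis using ri by simp
qed

lemma alg:
  fixes a b c u m n j x y :: int
  assumes u: "u = b + m*n" and bc: "b*c = 1 + j*n"
  shows "a*b + b*b*x + b*c*y - b*x + u*(x-a-b*x) = y + (j*y + m*(x-a-b*x))*n"
proof -
  have "a*b + b*b*x + b*c*y - b*x + u*(x-a-b*x)
      = a*b + b*b*x + (1 + j*n)*y - b*x + (b + m*n)*(x-a-b*x)"
    by (simp only: u bc[symmetric] mult.assoc)
  also have "\<dots> = y + (j*y + m*(x-a-b*x))*n" by (simp add: algebra_simps)
  finally show ?thesis .
qed

theorem mainTheorem17:
  fixes n a b c :: int
  assumes "n \<ge> 2"
    and "a \<in> {0..<n}" and "b \<in> {0..<n}" and "c \<in> {0..<n}"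
    and "a \<noteq> 0"
    and "coprime c n"
  shows "cross_inverse_prop n (lin_op n a b c) \<longleftrightarrow> [b * c = 1] (mod n)"
proof -
  have n: "n > 0" using assms(1) by simp
  obtain u where "[c * u = 1] (mod n)" using assms(6) cong_solve_coprime_int by blast
  then obtain k where cu: "c*u = 1 + k*n"
    by (metis cong_iff_lin cong_sym mult.commute)
  show ?thesis
  proof
    assume H: "cross_inverse_prop n (lin_op n a b c)"
    have z: "0 \<in> {0..<n}" and o: "1 \<in> {0..<(n::int)}" using assms(1) by auto
    have H': "\<And>y. y \<in> {0..<n} \<Longrightarrow> (a*b + b*b*0 + b*c*y - b*0 + u*(0-a-b*0)) mod n = y"
      using H z core[OF n cu z, of a b] unfolding cross_inverse_prop_def by metis
    have e0: "a*b + b*b*0 + b*c*0 - b*0 + u*(0-a-b*0) = a*b - u*a" by simp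
    have e1: "a*b + b*b*0 + b*c*1 - b*0 + u*(0-a-b*0) = a*b + b*c - u*a" by simp
    have h0: "(a*b - u*a) mod n = 0" using H'[OF z] e0 by simp
    have h1: "(a*b + b*c - u*a) mod n = 1" using H'[OF o] e1 by simp
    have "(b*c) mod n = ((a*b + b*c - u*a) - (a*b - u*a)) mod n" by simp
    also have "\<dots> = (1 - 0) mod n" by (metis h0 h1 mod_diff_eq)
    also have "\<dots> = 1" using assms(1) by simp
    finally show "[b * c = 1] (mod n)" unfolding cong_def using assms(1) by simp
  next
    assume "[b * c = 1] (mod n)"
    then obtain j where bc: "b*c = 1 + j*n"
      by (metis cong_iff_lin cong_sym mult.commute)
    have ub: "u = b + (b*k - j*u)*n"
    proof -
      have "b*(1 + k*n) = (1 + j*n)*u" by (metis cu bc mult.assoc)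
      thus ?thesis by (simp add: algebra_simps)
    qed
    show "cross_inverse_prop n (lin_op n a b c)"
      unfolding cross_inverse_prop_def
    proof (intro ballI)
      fix x y assume x: "x \<in> {0..<n}" and y: "y \<in> {0..<n}"
      obtain m where u: "u = b + m*n" using ub by blast
      have "a*b + b*b*x + b*c*y - b*x + u*(x-a-b*x) = y + (j*y + m*(x-a-b*x))*n"
        using alg[OF u bc] .
      then show "lin_op n a b c (lin_op n a b c x y) (right_inv n (lin_op n a b c) x) = y"
        using core[OF n cu x, of a b y] y by simp
    qed
  qed
qed

end
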